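(* Fix $a\in\mathbb{C}_v$ and $r>0$, and let $F(z)=\sum_{i\ge0}c_i(z-a)^i\in\mathbb{C}_v[[z-a]]$ converge on $D(a,r)$. If $F'$ has no zeros in $D(a,r)$, then $F$ maps $D(a,\kappa r)$ bijectively onto $D(c_0,|c_1|\kappa r)$.
   Context: $\mathbb{C}_v$ is an algebraically closed field of characteristic zero, complete with respect to a nontrivial non-archimedean absolute value $|\cdot|$; $D(a,r)=\{x\in\mathbb{C}_v:|x-a|<r\}$. Let $p$ be the residue characteristic of $\mathbb{C}_v$; define $\kappa:=|p|^{1/(p-1)}$ if $p>0$ and $\kappa:=1$ if $p=0$ (so $0<\kappa\le1$). *)

theory Defs
  imports Complex_Main "HOL-Computational_Algebra.Polynomial" "HOL-Computational_Algebra.Primes"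
begin

definition nonarch_abs :: "('a::field \<Rightarrow> real) \<Rightarrow> bool" where
  "nonarch_abs av \<longleftrightarrow>
     (\<forall>x. av x \<ge> 0) \<and> (\<forall>x. av x = 0 \<longleftrightarrow> x = 0) \<and>
     (\<forall>x y. av (x * y) = av x * av y) \<and>
     (\<forall>x y. av (x + y) \<le> max (av x) (av y))"

definition nontrivial_abs :: "('a::field \<Rightarrow> real) \<Rightarrow> bool" where
  "nontrivial_abs av \<longleftrightarrow> (\<exists>x. x \<noteq> 0 \<and> av x \<noteq> 1)"

definition complete_abs :: "('a::field \<Rightarrow> real) \<Rightarrow> bool" where
  "complete_abs av \<longleftrightarrow>
     (\<forall>X::nat \<Rightarrow> 'a. (\<forall>e>0. \<exists>N. \<forall>m\<ge>N. \<forall>n\<ge>N. av (X m - X n) < e) \<longrightarrow>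
        (\<exists>L. (\<lambda>n. av (X n - L)) \<longlonglongrightarrow> 0))"

definition alg_closed :: "'a::field itself \<Rightarrow> bool" where
  "alg_closed _ \<longleftrightarrow> (\<forall>p::'a poly. degree p > 0 \<longrightarrow> (\<exists>x. poly p x = 0))"

text \<open>The standing hypotheses on \<open>\<complex>\<^sub>v\<close> (characteristic zero is the type class).\<close>
definition Cv_field :: "('a::field_char_0 \<Rightarrow> real) \<Rightarrow> bool" where
  "Cv_field av \<longleftrightarrow> alg_closed TYPE('a) \<and> nonarch_abs av \<and> nontrivial_abs av \<and> complete_abs av"

definition disc :: "('a::field \<Rightarrow> real) \<Rightarrow> 'a \<Rightarrow> real \<Rightarrow> 'a set" where
  "disc av a r = {x. av (x - a) < r}"

text \<open>Residue characteristic: p > 0 iff p*1 lies in the maximal ideal, i.e. |p| < 1.\<close>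
definition residue_char :: "('a::field_char_0 \<Rightarrow> real) \<Rightarrow> nat" where
  "residue_char av = (if \<exists>p. prime p \<and> av (of_nat p) < 1
                      then (THE p. prime p \<and> av (of_nat p) < 1) else 0)"

definition kappa :: "('a::field_char_0 \<Rightarrow> real) \<Rightarrow> real" where
  "kappa av = (let p = residue_char av in
               if p > 0 then av (of_nat p) powr (1 / (real p - 1)) else 1)"

definition sums_v :: "('a::field \<Rightarrow> real) \<Rightarrow> (nat \<Rightarrow> 'a) \<Rightarrow> 'a \<Rightarrow> bool" where
  "sums_v av f s \<longleftrightarrow> (\<lambda>n. av ((\<Sum>i<n. f i) - s)) \<longlonglongrightarrow> 0"

definition ps_converges_on :: "('a::field \<Rightarrow> real) \<Rightarrow> (nat \<Rightarrow> 'a) \<Rightarrow> 'a \<Rightarrow> 'a set \<Rightarrow> bool" where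
  "ps_converges_on av c a S \<longleftrightarrow> (\<forall>z\<in>S. \<exists>s. sums_v av (\<lambda>i. c i * (z - a) ^ i) s)"

definition ps_eval :: "('a::field \<Rightarrow> real) \<Rightarrow> (nat \<Rightarrow> 'a) \<Rightarrow> 'a \<Rightarrow> 'a \<Rightarrow> 'a" where
  "ps_eval av c a z = (THE s. sums_v av (\<lambda>i. c i * (z - a) ^ i) s)"

definition ps_deriv :: "(nat \<Rightarrow> 'a::field) \<Rightarrow> nat \<Rightarrow> 'a" where
  "ps_deriv c i = of_nat (Suc i) * c (Suc i)"

end

theory Submission
  imports Defs
begin


locale NA =
  fixes av :: "'a::field_char_0 \<Rightarrow> real"
  assumes na: "nonarch_abs av"
begin

lemma nonneg[simp]: "av x \<ge> 0" using na unfolding nonarch_abs_def by auto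
lemma zero_iff[simp]: "av x = 0 \<longleftrightarrow> x = 0" using na unfolding nonarch_abs_def by auto
lemma mult: "av (x * y) = av x * av y" using na unfolding nonarch_abs_def by auto
lemma add_le: "av (x + y) \<le> max (av x) (av y)" using na unfolding nonarch_abs_def by auto

lemma av0[simp]: "av 0 = 0" by simp
lemma av1[simp]: "av 1 = 1"
proof -
  have "av 1 = av 1 * av 1" using mult[of 1 1] by simp
  moreover have "av 1 \<noteq> 0" by simp
  ultimately show ?thesis by (metis mult_cancel_left1)
qed
lemma pos: "x \<noteq> 0 \<Longrightarrow> av x > 0" using nonneg[of x] zero_iff[of x] by linarith
lemma av_minus1[simp]: "av (-1) = 1"
proof -
  have "av (-1) * av (-1) = 1" using mult[of "-1" "-1"] by simp
  then show ?thesis using nonneg[of "-1"]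
    by (metis abs_of_nonneg abs_square_eq_1 power2_eq_square)
qed
lemma av_uminus[simp]: "av (- x) = av x"
  using mult[of "-1" x] by simp
lemma av_commute: "av (x - y) = av (y - x)"
  by (metis av_uminus minus_diff_eq)
lemma av_power[simp]: "av (x ^ n) = av x ^ n"
  by (induction n) (auto simp: mult)
lemma av_inverse[simp]: "av (inverse x) = inverse (av x)"
proof (cases "x = 0")
  case False
  then have "av x * av (inverse x) = 1" by (metis mult right_inverse av1)
  then show ?thesis by (metis inverse_unique)
qed simp
lemma av_divide[simp]: "av (x / y) = av x / av y"
  by (simp add: divide_inverse mult)
lemma diff_le: "av (x - y) \<le> max (av x) (av y)"
  using add_le[of x "-y"] by simp
lemma tri: "av (x - z) \<le> max (av (x - y)) (av (y - z))"
  using add_le[of "x - y" "y - z"] by simp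
lemma le_max_diff: "av x \<le> max (av y) (av (x - y))"
  using add_le[of y "x - y"] by simp
lemma add_strict: "av y < av x \<Longrightarrow> av (x + y) = av x"
proof -
  assume h: "av y < av x"
  have "av (x + y) \<le> av x" using add_le[of x y] h by simp
  moreover have "av x \<le> max (av (x + y)) (av y)" using add_le[of "x + y" "-y"] by simp
  ultimately show ?thesis using h by linarith
qed
lemma of_nat_le1: "av (of_nat n) \<le> 1"
proof (induction n)
  case (Suc n) then show ?case using add_le[of 1 "of_nat n"] by (simp add: add.commute)
qed simp
lemma of_int_le1: "av (of_int n) \<le> 1"
proof (cases n rule: int_cases)
  case (neg m)
  have "of_int n = - (of_nat (Suc m) :: 'a)" using neg by simp
  then have "av (of_int n :: 'a) = av (of_nat (Suc m) :: 'a)" by (simp only: av_uminus)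
  then show ?thesis using of_nat_le1[of "Suc m"] by simp
qed (use of_nat_le1 in auto)

lemma sum_le: "finite A \<Longrightarrow> 0 \<le> E \<Longrightarrow> (\<And>i. i \<in> A \<Longrightarrow> av (f i) \<le> E) \<Longrightarrow> av (sum f A) \<le> E"
proof (induction A rule: finite_induct)
  case (insert x F)
  have "av (f x) \<le> E" "av (sum f F) \<le> E" using insert by auto
  then show ?case using add_le[of "f x" "sum f F"] by (simp add: sum.insert[OF insert(1,2)])
qed simp
lemma sum_less: "finite A \<Longrightarrow> 0 < E \<Longrightarrow> (\<And>i. i \<in> A \<Longrightarrow> av (f i) < E) \<Longrightarrow> av (sum f A) < E"
proof (induction A rule: finite_induct)
  case (insert x F)
  have "av (f x) < E" "av (sum f F) < E" using insert by auto
  then show ?case using add_le[of "f x" "sum f F"] by (simp add: sum.insert[OF insert(1,2)])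
qed simp

lemma pow_diff: "av x \<le> t \<Longrightarrow> av y \<le> t \<Longrightarrow> av (x ^ j - y ^ j) * t \<le> av (x - y) * t ^ j"
proof (induction j)
  case 0 then show ?case by simp
next
  case (Suc j)
  have t0: "t \<ge> 0" using Suc.prems nonneg order_trans by blast
  have eq: "x ^ Suc j - y ^ Suc j = x * (x ^ j - y ^ j) + (x - y) * y ^ j" by (simp add: algebra_simps)
  have 1: "av (x * (x ^ j - y ^ j)) * t \<le> av (x - y) * t ^ Suc j"
  proof -
    have "av (x * (x ^ j - y ^ j)) * t = av x * (av (x ^ j - y ^ j) * t)" by (simp add: mult)
    also have "\<dots> \<le> t * (av (x - y) * t ^ j)"
      by (rule mult_mono) (use Suc t0 in auto)
    finally show ?thesis by (simp add: algebra_simps)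
  qed
  have 2: "av ((x - y) * y ^ j) * t \<le> av (x - y) * t ^ Suc j"
  proof -
    have "av ((x - y) * y ^ j) * t = av (x - y) * (av y ^ j * t)" by (simp add: mult)
    also have "\<dots> \<le> av (x - y) * (t ^ j * t)"
      using Suc t0 by (intro mult_left_mono mult_right_mono power_mono) auto
    finally show ?thesis by (simp add: algebra_simps)
  qed
  have "av (x ^ Suc j - y ^ Suc j) * t \<le> max (av (x * (x ^ j - y ^ j))) (av ((x - y) * y ^ j)) * t"
    unfolding eq using add_le t0 mult_right_mono by blast
  also have "\<dots> \<le> av (x - y) * t ^ Suc j" using 1 2 t0 by (simp add: max_mult_distrib_right) 
  finally show ?case .
qed


lemma sum_split_diff: "n \<le> (m::nat) \<Longrightarrow> sum (f::nat\<Rightarrow>'a) {..<m} - sum f {..<n} = sum f {n..<m}"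
proof -
  assume "n \<le> m"
  then have "{..<m} = {..<n} \<union> {n..<m}" by auto
  then have "sum f {..<m} = sum f {..<n} + sum f {n..<m}" by (simp add: sum.union_disjoint[of "{..<n}" "{n..<m}"] ivl_disj_int)
  then show ?thesis by simp
qed

lemma LIM0_D: "(g::nat \<Rightarrow> real) \<longlonglongrightarrow> 0 \<Longrightarrow> e > 0 \<Longrightarrow> \<exists>N. \<forall>n\<ge>N. \<bar>g n\<bar> < e"
  using LIMSEQ_D[of g 0 e] by simp

lemma lim_bound:
  assumes "(\<lambda>n. av (X n - L)) \<longlonglongrightarrow> 0" and "\<And>n. n \<ge> N \<Longrightarrow> av (X n - c) \<le> E"
  shows "av (L - c) \<le> E"
proof -
  have "(\<lambda>n. av (X n - L) + E) \<longlonglongrightarrow> 0 + E" using assms(1) by (intro tendsto_add) auto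
  moreover have "\<forall>n\<ge>N. av (L - c) \<le> av (X n - L) + E"
  proof (intro allI impI)
    fix n assume "n \<ge> N"
    have E0: "0 \<le> E" using assms(2)[OF \<open>n \<ge> N\<close>] nonneg[of "X n - c"] by linarith
    have "av (L - c) \<le> max (av (L - X n)) (av (X n - c))" by (rule tri)
    also have "\<dots> \<le> av (X n - L) + E" using assms(2)[OF \<open>n \<ge> N\<close>] av_commute[of L "X n"] 
      by (intro max.boundedI) (use E0 nonneg[of "X n - L"] in linarith)+
    finally show "av (L - c) \<le> av (X n - L) + E" .
  qed
  ultimately show ?thesis using LIMSEQ_le_const by fastforce
qed

lemma lim_unique:
  assumes "(\<lambda>n. av (X n - L)) \<longlonglongrightarrow> 0" "(\<lambda>n. av (X n - L')) \<longlonglongrightarrow> 0"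
  shows "L = L'"
proof -
  have "\<forall>e>0. av (L - L') \<le> e"
  proof (intro allI impI)
    fix e :: real assume "e > 0"
    then obtain N where "\<forall>n\<ge>N. av (X n - L') < e" using LIM0_D[OF assms(2)] by auto
    then show "av (L - L') \<le> e" using lim_bound[OF assms(1), of N L' e] less_imp_le by blast
  qed
  then have "av (L - L') \<le> 0" by (meson dense not_le)
  then show ?thesis using nonneg[of "L - L'"] by simp
qed

lemma sums_unique: "sums_v av f s \<Longrightarrow> sums_v av f u \<Longrightarrow> s = u"
  unfolding sums_v_def by (rule lim_unique)

lemma ps_eval_eq: "sums_v av (\<lambda>i. c i * (z - a) ^ i) s \<Longrightarrow> ps_eval av c a z = s"
  unfolding ps_eval_def by (rule the_equality) (auto intro: sums_unique)

lemma sums_bound: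
  assumes "sums_v av f s" and "\<And>n. n \<ge> N \<Longrightarrow> av (sum f {..<n} - c) \<le> E"
  shows "av (s - c) \<le> E"
  using assms unfolding sums_v_def by (rule lim_bound)

lemma terms_to_0:
  assumes "sums_v av f s" shows "(\<lambda>n. av (f n)) \<longlonglongrightarrow> 0"
proof -
  define A where "A = (\<lambda>n. av (sum f {..<n} - s))"
  have h: "A \<longlonglongrightarrow> 0" using assms unfolding sums_v_def A_def .
  have g: "(\<lambda>n. A (Suc n) + A n) \<longlonglongrightarrow> 0 + 0"
    by (intro tendsto_add h LIMSEQ_Suc[OF h])
  have le: "av (f n) \<le> A (Suc n) + A n" for n
  proof -
    have e: "f n = (sum f {..<Suc n} - s) - (sum f {..<n} - s)" by simp
    have "av (f n) = av ((sum f {..<Suc n} - s) - (sum f {..<n} - s))" using e by (rule arg_cong)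
    also have "\<dots> \<le> max (av (sum f {..<Suc n} - s)) (av (sum f {..<n} - s))" by (rule diff_le)
    finally have "av (f n) \<le> max (A (Suc n)) (A n)" unfolding A_def .
    moreover have "max (A (Suc n)) (A n) \<le> A (Suc n) + A n"
      using nonneg unfolding A_def by (intro max.boundedI) (simp add: add_increasing2 add_increasing)+
    ultimately show ?thesis by (rule order_trans)
  qed
  show ?thesis
  proof (rule tendsto_sandwich[of "\<lambda>_. 0" _ _ "\<lambda>n. A (Suc n) + A n"])
    show "\<forall>\<^sub>F n in sequentially. 0 \<le> av (f n)" by simp
    show "\<forall>\<^sub>F n in sequentially. av (f n) \<le> A (Suc n) + A n" using le by simp
    show "(\<lambda>n. 0) \<longlonglongrightarrow> (0::real)" by simp
    show "(\<lambda>n. A (Suc n) + A n) \<longlonglongrightarrow> 0" using g by simp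
  qed
qed

end

locale CV = NA av for av :: "'a::field_char_0 \<Rightarrow> real" +
  assumes complete: "complete_abs av" and ac: "alg_closed TYPE('a)" and nt: "nontrivial_abs av"
begin

lemma cauchy_conv:
  assumes "\<And>k m. k \<le> m \<Longrightarrow> av (X m - X k) \<le> D k" and "D \<longlonglongrightarrow> 0"
  shows "\<exists>L. (\<lambda>n. av (X n - L)) \<longlonglongrightarrow> 0"
proof -
  have "\<forall>e>0. \<exists>N. \<forall>m\<ge>N. \<forall>n\<ge>N. av (X m - X n) < e"
  proof (intro allI impI)
    fix e :: real assume "e > 0"
    then obtain N where N: "\<forall>n\<ge>N. \<bar>D n\<bar> < e" using LIM0_D[OF assms(2)] by auto
    have "av (X m - X n) < e" if "m \<ge> N" "n \<ge> N" for m n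
    proof -
      have "av (X m - X n) \<le> max (av (X m - X N)) (av (X N - X n))" by (rule tri)
      also have "\<dots> \<le> D N" using assms(1)[OF \<open>m \<ge> N\<close>] assms(1)[OF \<open>n \<ge> N\<close>] av_commute[of "X N" "X n"] by auto
      finally show ?thesis using N by auto
    qed
    then show "\<exists>N. \<forall>m\<ge>N. \<forall>n\<ge>N. av (X m - X n) < e" by blast
  qed
  then show ?thesis using complete[unfolded complete_abs_def, rule_format, of X] by blast
qed

lemma terms_conv:
  assumes "(\<lambda>n. av (f n)) \<longlonglongrightarrow> 0" shows "\<exists>s. sums_v av f s"
proof -
  have "\<forall>e>0. \<exists>N. \<forall>m\<ge>N. \<forall>n\<ge>N. av (sum f {..<m} - sum f {..<n}) < e"
  proof (intro allI impI)
    fix e :: real assume "e > 0"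
    then obtain N where N: "\<forall>n\<ge>N. av (f n) < e" using LIM0_D[OF assms] by auto
    have *: "av (sum f {..<m} - sum f {..<n}) < e" if "m \<ge> n" "n \<ge> N" for m n
      using sum_less[of "{n..<m}" e f] N that \<open>e > 0\<close> sum_split_diff[OF \<open>m \<ge> n\<close>, of f] by auto
    have "av (sum f {..<m} - sum f {..<n}) < e" if "m \<ge> N" "n \<ge> N" for m n
    proof (cases "n \<le> m")
      case True then show ?thesis using * that by auto
    next
      case False then show ?thesis using *[of m n] that av_commute[of "sum f {..<m}"] by auto
    qed
    then show "\<exists>N. \<forall>m\<ge>N. \<forall>n\<ge>N. av (sum f {..<m} - sum f {..<n}) < e" by blast
  qed
  then show ?thesis using complete[unfolded complete_abs_def, rule_format, of "\<lambda>n. sum f {..<n}"]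
    unfolding sums_v_def by blast
qed

end


context NA begin

lemma other_prime:
  assumes p: "prime (p::nat)" and q: "prime q" and pq: "p \<noteq> q" and lt: "av (of_nat p) < 1"
  shows "av (of_nat q :: 'a) = 1"
proof -
  have "coprime (int p) (int q)" using primes_coprime[OF p q pq] by simp
  then have "gcd (int p) (int q) = 1" by simp
  then obtain u v where uv: "u * int p + v * int q = 1" using bezout_int by metis
  then have "(of_int (u * int p + v * int q) :: 'a) = 1" by simp
  then have e: "of_int u * of_nat p + of_int v * of_nat q = (1::'a)" by simp
  have "1 = av (of_int u * of_nat p + of_int v * (of_nat q::'a))" using e by simp
  also have "\<dots> \<le> max (av (of_int u * (of_nat p::'a))) (av (of_int v * (of_nat q::'a)))" by (rule add_le)
  also have "\<dots> \<le> max (av (of_nat p :: 'a)) (av (of_nat q :: 'a))"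
    using of_int_le1[of u] of_int_le1[of v] nonneg[of "of_nat p"] nonneg[of "of_nat q"]
      mult_left_le_one_le[of "av (of_nat p::'a)" "av (of_int u::'a)"]
      mult_left_le_one_le[of "av (of_nat q::'a)" "av (of_int v::'a)"]
    by (auto simp: mult intro!: max.mono)
  finally show ?thesis using lt of_nat_le1[of q] by linarith
qed

lemma res_char_cases:
  "(residue_char av = 0 \<and> (\<forall>q. prime q \<longrightarrow> av (of_nat q :: 'a) = 1)) \<or>
   (prime (residue_char av) \<and> av (of_nat (residue_char av)) < 1 \<and>
      (\<forall>q. prime q \<and> q \<noteq> residue_char av \<longrightarrow> av (of_nat q :: 'a) = 1))"
proof (cases "\<exists>p. prime p \<and> av (of_nat p :: 'a) < 1")
  case True
  then obtain p where p: "prime p" "av (of_nat p :: 'a) < 1" by blast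
  have "(THE p. prime p \<and> av (of_nat p :: 'a) < 1) = p"
  proof (rule the_equality)
    show "prime p \<and> av (of_nat p :: 'a) < 1" using p by simp
    fix p' assume h: "prime p' \<and> av (of_nat p' :: 'a) < 1"
    show "p' = p"
    proof (rule ccontr)
      assume "p' \<noteq> p"
      then have "av (of_nat p' :: 'a) = 1" using other_prime[of p p'] p h by auto
      then show False using h by simp
    qed
  qed
  then have r: "residue_char av = p" using True unfolding residue_char_def by simp
  have "\<forall>q. prime q \<and> q \<noteq> residue_char av \<longrightarrow> av (of_nat q :: 'a) = 1"
    using p other_prime unfolding r by blast
  then show ?thesis using p r by simp
next
  case False
  then have r: "residue_char av = 0" unfolding residue_char_def by (simp only: if_False)
  have "av (of_nat q :: 'a) = 1" if "prime q" for q
  proof -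
    have "\<not> av (of_nat q :: 'a) < 1" using False that by blast
    then show ?thesis using of_nat_le1[of q] by linarith
  qed
  then show ?thesis using r by simp
qed

lemma kappa_props: "0 < kappa av" "kappa av \<le> 1"
  "residue_char av > 0 \<Longrightarrow> kappa av ^ (residue_char av - 1) = av (of_nat (residue_char av))"
proof -
  let ?P = "residue_char av"
  have "(0 < kappa av \<and> kappa av \<le> 1) \<and> (?P > 0 \<longrightarrow> kappa av ^ (?P - 1) = av (of_nat ?P))"
  proof (cases "?P > 0")
    case True
    then have pr: "prime ?P" "av (of_nat ?P :: 'a) < 1" using res_char_cases by auto
    have P2: "?P \<ge> 2" using pr prime_ge_2_nat by blast
    have pos: "av (of_nat ?P :: 'a) > 0" using True by (intro pos) simp
    have k: "kappa av = av (of_nat ?P) powr (1 / (real ?P - 1))" using True by (simp add: kappa_def Let_def)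
    have e: "1 / (real ?P - 1) > 0" using P2 by simp
    have "kappa av > 0" using k pos True by simp
    moreover have "kappa av \<le> 1" using k pos pr(2) e by (simp add: powr_le1)
    moreover have "kappa av ^ (?P - 1) = av (of_nat ?P)"
    proof -
      have kp: "kappa av > 0" using k pos True by simp
      have "kappa av ^ (?P - 1) = kappa av powr real (?P - 1)" using kp by (simp add: powr_realpow)
      also have "\<dots> = av (of_nat ?P) powr ((1 / (real ?P - 1)) * real (?P - 1))"
        unfolding k by (simp add: powr_powr)
      finally have "kappa av ^ (?P - 1) = av (of_nat ?P) powr ((1 / (real ?P - 1)) * real (?P - 1))" .
      also have "(1 / (real ?P - 1)) * real (?P - 1) = 1" using P2 by (simp add: of_nat_diff)
      finally show ?thesis using pos by simp
    qed
    ultimately show ?thesis by simp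
  next
    case False
    then show ?thesis by (simp add: kappa_def Let_def)
  qed
  then show "0 < kappa av" "kappa av \<le> 1"
    "residue_char av > 0 \<Longrightarrow> kappa av ^ (residue_char av - 1) = av (of_nat (residue_char av))" by auto
qed

lemma kappa_pow_le: "n \<ge> 1 \<Longrightarrow> kappa av ^ (n - 1) \<le> av (of_nat n :: 'a)"
proof (induction n rule: less_induct)
  case (less n)
  let ?k = "kappa av"
  have k0: "0 < ?k" and k1: "?k \<le> 1" using kappa_props by auto
  show ?case
  proof (cases "n = 1")
    case True then show ?thesis by simp
  next
    case False
    then obtain q where q: "prime q" "q dvd n" using prime_factor_nat by blast
    then obtain m where m: "n = q * m" by blast
    have q2: "q \<ge> 2" using q prime_ge_2_nat by blast
    have m1: "m \<ge> 1" using m less.prems by (cases m) auto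
    have mn: "m < n" using m q2 m1 by simp
    have IH: "?k ^ (m - 1) \<le> av (of_nat m :: 'a)" using less.IH[OF mn m1] .
    have avn: "av (of_nat n :: 'a) = av (of_nat q :: 'a) * av (of_nat m :: 'a)" using m by (simp add: mult)
    have "?k ^ (q - 1) \<le> av (of_nat q :: 'a)"
    proof (cases "residue_char av > 0 \<and> q = residue_char av")
      case True then show ?thesis using kappa_props(3) by auto
    next
      case False
      then have "av (of_nat q :: 'a) = 1" using res_char_cases q by auto
      then show ?thesis using k0 k1 by (simp add: power_le_one)
    qed
    then have "?k ^ (q - 1) * ?k ^ (m - 1) \<le> av (of_nat n :: 'a)"
      unfolding avn using IH k0 by (intro mult_mono) auto
    moreover have "?k ^ (n - 1) \<le> ?k ^ (q - 1) * ?k ^ (m - 1)"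
    proof -
      have a1: "(m-1) \<le> q*(m-1)" using q2 by simp
      have a2: "q*m = q*(m-1) + q" using m1 by (cases m) auto
      have "q - 1 + (m - 1) \<le> n - 1" using a1 a2 m q2 m1 by linarith
      then have "?k ^ (n - 1) \<le> ?k ^ (q - 1 + (m - 1))" using k0 k1 by (intro power_decreasing) auto
      then show ?thesis by (simp add: power_add)
    qed
    ultimately show ?thesis by linarith
  qed
qed

end


definition Tp :: "(nat \<Rightarrow> 'a::comm_ring_1) \<Rightarrow> 'a \<Rightarrow> nat \<Rightarrow> 'a poly" where
  "Tp g \<alpha> n = (\<Sum>j\<le>n. smult (g j) ([:\<alpha>, 1:] ^ j))"

lemma poly_Tp: "poly (Tp g \<alpha> n) y = (\<Sum>j\<le>n. g j * (\<alpha> + y) ^ j)"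
  unfolding Tp_def by (simp add: poly_sum)

lemma coeff_lin_pow: "coeff ([:\<alpha>, 1:] ^ j) k = (if k \<le> j then of_nat (j choose k) * \<alpha> ^ (j - k) else (0::'a::comm_ring_1))"
proof (cases "k \<le> j")
  case True then show ?thesis using coeff_linear_poly_power[OF True, of \<alpha> 1] by simp
next
  case False
  have "degree ([:\<alpha>, 1:] ^ j) \<le> j" using degree_power_le[of "[:\<alpha>, 1:]" j] by simp
  then show ?thesis using False by (simp add: coeff_eq_0)
qed

lemma coeff_Tp: "coeff (Tp g \<alpha> n) k = (\<Sum>j\<le>n. g j * coeff ([:\<alpha>, 1:] ^ j) k)"
  unfolding Tp_def by (simp add: coeff_sum)

lemma coeff_Tp0: "coeff (Tp g 0 n) k = (if k \<le> n then g k else 0)"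
proof -
  have "coeff (Tp g 0 n) k = (\<Sum>j\<le>n. (if j = k then g j else 0))"
    unfolding coeff_Tp by (intro sum.cong refl) (auto simp: coeff_lin_pow power_0_left)
  then show ?thesis by simp
qed

context NA begin

lemma Tp_coeff_N:
  assumes t: "t > 0" and al: "av \<alpha> \<le> t" and Nn: "N \<le> n" and M: "av (g N) * t ^ N = M" and M0: "M > 0"
    and dom: "\<And>j. N < j \<Longrightarrow> av (g j) * t ^ j < M"
  shows "av (coeff (Tp g \<alpha> n) N) = av (g N)"
proof -
  let ?C = "\<lambda>j. g j * coeff ([:\<alpha>, 1:] ^ j) N"
  have gN: "av (g N) > 0" using M M0 t by (metis mult_eq_0_iff nonneg order_le_less zero_less_power)
  have split: "{..n} = insert N ({..n} - {N})" using Nn by auto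
  have "coeff (Tp g \<alpha> n) N = ?C N + sum ?C ({..n} - {N})"
    unfolding coeff_Tp using Nn by (intro sum.remove) auto
  also have "?C N = g N" by (simp add: coeff_lin_pow)
  finally have e: "coeff (Tp g \<alpha> n) N = g N + sum ?C ({..n} - {N})" .
  have "av (sum ?C ({..n} - {N})) < av (g N)"
  proof (rule sum_less)
    fix j assume j: "j \<in> {..n} - {N}"
    show "av (?C j) < av (g N)"
    proof (cases "N < j")
      case False then have "j < N" using j by auto
      then show ?thesis using gN by (simp add: coeff_lin_pow)
    next
      case True
      have "av (?C j) = av (g j) * (av (of_nat (j choose N) :: 'a) * av \<alpha> ^ (j - N))"
        using True by (simp add: coeff_lin_pow mult)
      also have "\<dots> \<le> av (g j) * (1 * t ^ (j - N))"
        using of_nat_le1 al by (intro mult_left_mono mult_mono power_mono) auto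
      also have "\<dots> < av (g N)"
      proof -
        have "av (g j) * t ^ (j - N) * t ^ N = av (g j) * t ^ j"
          using True by (simp add: mult.assoc power_add[symmetric])
        also have "\<dots> < av (g N) * t ^ N" using dom[OF True] M by simp
        finally show ?thesis using t by simp
      qed
      finally show ?thesis .
    qed
  qed (use gN in auto)
  then show ?thesis unfolding e by (simp add: add_strict)
qed

end

context CV begin

lemma root_small_aux:
  assumes "s > 0" and "\<forall>\<beta>. poly P \<beta> = 0 \<longrightarrow> av \<beta> \<ge> s"
  shows "av (coeff P k) * s ^ k \<le> av (coeff P 0)"
  using assms
proof (induction "degree P" arbitrary: P k rule: less_induct)
  case less
  show ?case
  proof (cases "degree P = 0")
    case True
    then show ?thesis by (cases k) (auto simp: coeff_eq_0)
  next
    case False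
    then obtain \<alpha> where \<alpha>: "poly P \<alpha> = 0" using ac unfolding alg_closed_def by auto
    then have as: "av \<alpha> \<ge> s" using less.prems by auto
    obtain R where R: "P = [:-\<alpha>, 1:] * R" using \<alpha> poly_eq_0_iff_dvd by (metis dvdE)
    have R0: "R \<noteq> 0" using R False by auto
    have "degree P = degree [:-\<alpha>, 1:] + degree R" unfolding R by (rule degree_mult_eq) (use R0 in auto)
    then have dR: "degree P = Suc (degree R)" by simp
    have rootsR: "\<forall>\<beta>. poly R \<beta> = 0 \<longrightarrow> av \<beta> \<ge> s" using less.prems R by auto
    have IH: "\<And>k. av (coeff R k) * s ^ k \<le> av (coeff R 0)"
      using less.hyps[of R] dR less.prems(1) rootsR by auto
    have cP: "coeff P k = (case k of 0 \<Rightarrow> 0 | Suc j \<Rightarrow> coeff R j) - \<alpha> * coeff R k" for k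
      unfolding R by (simp add: mult_pCons_left coeff_pCons split: nat.split)
    have cP0: "av (coeff P 0) = av \<alpha> * av (coeff R 0)" using cP[of 0] by (simp add: mult)
    show ?thesis
    proof (cases k)
      case 0 then show ?thesis by simp
    next
      case (Suc j)
      have "av (coeff P k) \<le> max (av (coeff R j)) (av (\<alpha> * coeff R k))"
        using cP[of k] Suc diff_le by simp
      then have "av (coeff P k) * s ^ k \<le> max (av (coeff R j) * s ^ k) (av (\<alpha> * coeff R k) * s ^ k)"
        using less.prems(1) by (metis max_mult_distrib_right mult_right_mono zero_le_power less_imp_le)
      also have "\<dots> \<le> av (coeff P 0)"
      proof (rule max.boundedI)
        have "av (coeff R j) * s ^ k = (av (coeff R j) * s ^ j) * s" using Suc by (simp add: algebra_simps)
        also have "\<dots> \<le> av (coeff R 0) * av \<alpha>" using IH[of j] as less.prems(1)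
          by (intro mult_mono) auto
        finally show "av (coeff R j) * s ^ k \<le> av (coeff P 0)" using cP0 by (simp add: mult.commute)
        have "av (\<alpha> * coeff R k) * s ^ k = av \<alpha> * (av (coeff R k) * s ^ k)" by (simp add: mult)
        also have "\<dots> \<le> av \<alpha> * av (coeff R 0)" using IH[of k] by (intro mult_left_mono) auto
        finally show "av (\<alpha> * coeff R k) * s ^ k \<le> av (coeff P 0)" using cP0 by simp
      qed
      finally show ?thesis .
    qed
  qed
qed

lemma root_small:
  assumes "s > 0" and "av (coeff P 0) < av (coeff P k) * s ^ k"
  shows "\<exists>\<beta>. poly P \<beta> = 0 \<and> av \<beta> < s"
  using root_small_aux[OF assms(1), of P k] assms(2) by (meson not_le)

lemma exists_root: "n > 0 \<Longrightarrow> \<exists>y. y ^ n = (w::'a)"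
proof -
  assume n: "n > 0"
  let ?p = "[:-w:] + monom 1 n"
  have d: "degree ?p = n" using n by (subst degree_add_eq_right) (auto simp: degree_monom_eq)
  have "\<exists>x. poly ?p x = 0" using ac[unfolded alg_closed_def, rule_format, of ?p] d n by simp
  then obtain y where "poly ?p y = 0" by blast
  then have "y ^ n = w" by (simp add: poly_monom)
  then show ?thesis by blast
qed

lemma dense_val:
  assumes t: "0 < t" and tr: "t < r"
  shows "\<exists>x. t < av x \<and> av x < r"
proof -
  obtain x0 where x0: "x0 \<noteq> 0" "av x0 \<noteq> 1" using nt unfolding nontrivial_abs_def by auto
  obtain x1 where x1: "x1 \<noteq> 0" "av x1 > 1"
  proof (cases "av x0 > 1")
    case True then show ?thesis using that x0 by blast
  next
    case False
    then have "av x0 < 1" using x0 by auto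
    moreover have "av x0 > 0" using x0 pos by blast
    ultimately have "av (inverse x0) > 1" by (simp add: one_less_inverse)
    then show ?thesis using that[of "inverse x0"] x0 by simp
  qed
  define q where "q = av x1"
  have q1: "q > 1" using x1 q_def by simp
  have lq: "ln q > 0" using q1 by simp
  have "ln t / ln q < ln r / ln q" using t tr lq by (simp add: divide_strict_right_mono)
  then obtain \<rho> where \<rho>: "\<rho> \<in> \<rat>" "ln t / ln q < \<rho>" "\<rho> < ln r / ln q" using Rats_dense_in_real by blast
  obtain k b where kb: "b > 0" "\<rho> = of_int k / of_int b" using \<rho>(1) Rats_cases' by metis
  define w where "w = (if k \<ge> 0 then x1 ^ nat k else inverse x1 ^ nat (-k))"
  have aw: "av w = q powr (of_int k)"
  proof (cases "k \<ge> 0")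
    case True
    then have "av w = q ^ nat k" by (simp add: w_def q_def)
    also have "\<dots> = q powr real (nat k)" using q1 by (simp add: powr_realpow)
    finally show ?thesis using True by simp
  next
    case False
    then have "av w = inverse (q ^ nat (-k))" by (simp add: w_def q_def power_inverse)
    also have "\<dots> = inverse (q powr real (nat (-k)))" using q1 by (simp add: powr_realpow)
    also have "\<dots> = q powr (- real (nat (-k)))" by (simp add: powr_minus)
    finally show ?thesis using False by simp
  qed
  obtain y where y: "y ^ nat b = w" using exists_root[of "nat b" w] kb by auto
  have ypos: "av y > 0"
  proof -
    have "w \<noteq> 0" using x1 by (simp add: w_def)
    moreover have "nat b > 0" using kb by simp
    ultimately have "y \<noteq> 0" using y by auto
    then show ?thesis using pos by blast
  qed
  have "av y powr (of_int b) = av y powr real (nat b)" using kb by simp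
  also have "\<dots> = av y ^ nat b" using ypos by (simp add: powr_realpow)
  also have "\<dots> = av w" using y av_power[of y "nat b"] by simp
  finally have "av y powr (of_int b) = q powr (of_int k)" using aw by simp
  then have "(av y powr (of_int b)) powr (1 / of_int b) = (q powr (of_int k)) powr (1 / of_int b)" by simp
  then have ay: "av y = q powr \<rho>" using kb ypos by (simp add: powr_powr)
  have "ln (av y) = \<rho> * ln q" using ay q1 by (simp add: ln_powr)
  moreover have "ln t < \<rho> * ln q" "\<rho> * ln q < ln r" using \<rho> lq by (auto simp: field_simps)
  ultimately have "ln t < ln (av y)" "ln (av y) < ln r" by auto
  then have "t < av y" "av y < r" using t ypos tr by auto
  then show ?thesis by blast
qed

end


lemma dominant_index:
  fixes f :: "nat \<Rightarrow> real"
  assumes hb: "\<And>i. f i \<le> B * \<rho> ^ i" and r0: "0 \<le> \<rho>" and r1: "\<rho> < 1" and fj: "f j0 > 0"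
  shows "\<exists>N. f N \<ge> f j0 \<and> (\<forall>i. f i \<le> f N) \<and> (\<forall>i>N. f i < f N)"
proof -
  have "(\<lambda>i. B * \<rho> ^ i) \<longlonglongrightarrow> B * 0" using r0 r1 by (intro tendsto_mult LIMSEQ_power_zero) auto
  then have "(\<lambda>i. B * \<rho> ^ i) \<longlonglongrightarrow> 0" by simp
  from LIMSEQ_D[OF this fj] obtain K where K: "\<forall>i\<ge>K. \<bar>B * \<rho> ^ i\<bar> < f j0" by auto
  define S where "S = {i. f j0 \<le> f i}"
  have SK: "S \<subseteq> {..<K}"
  proof
    fix i assume "i \<in> S"
    then have "f j0 \<le> f i" by (simp add: S_def)
    show "i \<in> {..<K}"
    proof (rule ccontr)
      assume "i \<notin> {..<K}"
      then have "\<bar>B * \<rho> ^ i\<bar> < f j0" using K by auto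
      then show False using hb[of i] \<open>f j0 \<le> f i\<close> by linarith
    qed
  qed
  then have fS: "finite S" by (rule finite_subset) auto
  have j0S: "j0 \<in> S" by (simp add: S_def)
  define M where "M = Max (f ` S)"
  have MS: "M \<in> f ` S" unfolding M_def using fS j0S by (intro Max_in) auto
  have leM: "f i \<le> M" if "i \<in> S" for i unfolding M_def using fS that by auto
  define T where "T = {i \<in> S. f i = M}"
  have fT: "finite T" using fS by (simp add: T_def)
  have Tne: "T \<noteq> {}" using MS by (auto simp: T_def)
  define N where "N = Max T"
  have NT: "N \<in> T" unfolding N_def using fT Tne by (rule Max_in)
  have fN: "f N = M" "N \<in> S" using NT by (auto simp: T_def)
  have Mj: "f j0 \<le> M" using leM[OF j0S] .
  have all: "f i \<le> M" for i
  proof (cases "i \<in> S")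
    case True then show ?thesis by (rule leM)
  next
    case False then show ?thesis using Mj by (auto simp: S_def)
  qed
  have gt: "f i < M" if "i > N" for i
  proof (rule ccontr)
    assume "\<not> f i < M"
    then have "f i = M" using all[of i] by auto
    then have "i \<in> T" using Mj by (auto simp: T_def S_def)
    then have "i \<le> N" unfolding N_def using fT by auto
    then show False using that by simp
  qed
  show ?thesis using fN Mj all gt by auto
qed

context NA begin

lemma tail_bound:
  assumes G: "sums_v av (\<lambda>i. g i * x ^ i) G" and x: "av x \<le> t"
    and hb: "\<And>i. av (g i) * t ^ i \<le> B * \<rho> ^ i" and r0: "0 \<le> \<rho>" and r1: "\<rho> \<le> 1" and B0: "B \<ge> 0"
  shows "av (G - (\<Sum>i\<le>m. g i * x ^ i)) \<le> B * \<rho> ^ Suc m"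
proof -
  have t0: "t \<ge> 0" using x nonneg order_trans by blast
  have "av (sum (\<lambda>i. g i * x ^ i) {..<n} - (\<Sum>i\<le>m. g i * x ^ i)) \<le> B * \<rho> ^ Suc m" if n: "n \<ge> Suc m" for n
  proof -
    have "sum (\<lambda>i. g i * x ^ i) {..<n} - (\<Sum>i\<le>m. g i * x ^ i) = sum (\<lambda>i. g i * x ^ i) {Suc m..<n}"
      using sum_split_diff[OF n, of "\<lambda>i. g i * x ^ i"] by (simp add: lessThan_Suc_atMost)
    also have "av \<dots> \<le> B * \<rho> ^ Suc m"
    proof (rule sum_le)
      fix i assume i: "i \<in> {Suc m..<n}"
      have "av (g i * x ^ i) = av (g i) * av x ^ i" by (simp add: mult)
      also have "\<dots> \<le> av (g i) * t ^ i" using x by (intro mult_left_mono power_mono) auto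
      also have "\<dots> \<le> B * \<rho> ^ i" by (rule hb)
      also have "\<dots> \<le> B * \<rho> ^ Suc m" using i r0 r1 B0 by (intro mult_left_mono power_decreasing) auto
      finally show "av (g i * x ^ i) \<le> B * \<rho> ^ Suc m" .
    qed (use B0 r0 in auto)
    finally show ?thesis .
  qed
  then show ?thesis using sums_bound[OF G] by blast
qed

lemma lip_bound:
  assumes x: "av x \<le> t" and y: "av y \<le> t" and t: "t > 0" and hM: "\<And>i. av (g i) * t ^ i \<le> M"
  shows "av ((\<Sum>i\<le>m. g i * x ^ i) - (\<Sum>i\<le>m. g i * y ^ i)) \<le> M / t * av (x - y)"
proof -
  have M0: "M \<ge> 0" using hM[of 0] nonneg[of "g 0"] by (simp del: nonneg)
  have "(\<Sum>i\<le>m. g i * x ^ i) - (\<Sum>i\<le>m. g i * y ^ i) = (\<Sum>i\<le>m. g i * (x ^ i - y ^ i))"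
    by (simp add: sum_subtractf right_diff_distrib)
  also have "av \<dots> \<le> M / t * av (x - y)"
  proof (rule sum_le)
    fix i assume "i \<in> {..m}"
    have "av (g i * (x ^ i - y ^ i)) * t = av (g i) * (av (x ^ i - y ^ i) * t)" by (simp add: mult)
    also have "\<dots> \<le> av (g i) * (av (x - y) * t ^ i)" using pow_diff[OF x y] by (intro mult_left_mono) auto
    also have "\<dots> = (av (g i) * t ^ i) * av (x - y)" by simp
    also have "\<dots> \<le> M * av (x - y)" using hM by (intro mult_right_mono) auto
    finally show "av (g i * (x ^ i - y ^ i)) \<le> M / t * av (x - y)" using t by (simp add: field_simps)
  qed (use M0 t in auto)
  finally show ?thesis .
qed

end


context CV begin

lemma nozero_bound:
  assumes conv: "\<forall>z. av (z - a) < r \<longrightarrow> (\<exists>s. sums_v av (\<lambda>i. g i * (z - a) ^ i) s)"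
    and nz: "\<forall>z. av (z - a) < r \<longrightarrow> ps_eval av g a z \<noteq> 0"
    and t: "0 < t" "t < r"
  shows "av (g j) * t ^ j \<le> av (g 0)"
proof (rule ccontr)
  assume "\<not> ?thesis"
  then have jbig: "av (g 0) < av (g j) * t ^ j" by simp
  obtain x0 where x0: "t < av x0" "av x0 < r" using dense_val t by blast
  have x0pos: "av x0 > 0" using x0 t by simp
  have x0nz: "x0 \<noteq> 0" using x0pos by auto
  obtain s0 where s0: "sums_v av (\<lambda>i. g i * ((a + x0) - a) ^ i) s0" using conv[rule_format, of "a + x0"] x0 by auto
  then have s0': "sums_v av (\<lambda>i. g i * x0 ^ i) s0" by simp
  have "(\<lambda>i. av (g i * x0 ^ i)) \<longlonglongrightarrow> 0" by (rule terms_to_0[OF s0'])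
  then have "Bseq (\<lambda>i. av (g i * x0 ^ i))" by (intro convergent_imp_Bseq convergentI)
  then obtain B where B: "B > 0" "\<forall>i. norm (av (g i * x0 ^ i)) \<le> B" unfolding Bseq_def by auto
  define \<rho> where "\<rho> = t / av x0"
  have \<rho>: "0 < \<rho>" "\<rho> < 1" using t x0 by (auto simp: \<rho>_def)
  have hb: "av (g i) * t ^ i \<le> B * \<rho> ^ i" for i
  proof -
    have "av (g i) * t ^ i = av (g i * x0 ^ i) * \<rho> ^ i" using x0pos x0nz by (simp add: mult \<rho>_def power_divide)
    also have "\<dots> \<le> B * \<rho> ^ i" using B \<rho> by (intro mult_right_mono) auto
    finally show ?thesis .
  qed
  have fj: "av (g j) * t ^ j > 0" using jbig nonneg[of "g 0"] by linarith
  obtain N where N: "av (g N) * t ^ N \<ge> av (g j) * t ^ j" "\<forall>i. av (g i) * t ^ i \<le> av (g N) * t ^ N"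
      "\<forall>i>N. av (g i) * t ^ i < av (g N) * t ^ N"
    using dominant_index[of "\<lambda>i. av (g i) * t ^ i" B \<rho> j, OF hb] \<rho> fj by auto
  define M where "M = av (g N) * t ^ N"
  have M0: "M > 0" "av (g 0) < M" using N(1) fj jbig by (auto simp: M_def)
  have hM: "\<And>i. av (g i) * t ^ i \<le> M" using N(2) by (simp add: M_def)
  have N1: "N > 0"
  proof (rule ccontr)
    assume "\<not> N > 0" then have "N = 0" by simp
    then show False using M0 by (simp add: M_def)
  qed
  define P where "P = (\<lambda>m x. \<Sum>i\<le>m. g i * x ^ i)"
  define lam where "lam = root N \<rho>"
  define D where "D = root N (2 * B / M)"
  have lam: "0 < lam" "lam < 1" "lam ^ N = \<rho>" using N1 \<rho> by (auto simp: lam_def real_root_gt_zero real_root_lt_1_iff real_root_pow_pos2)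
  have D: "0 < D" "D ^ N = 2 * B / M" using N1 B M0 by (auto simp: D_def real_root_gt_zero real_root_pow_pos2)
  define s where "s = (\<lambda>n. t * D * lam ^ Suc n)"
  have spos: "s n > 0" for n using t D lam by (simp add: s_def)
  have sdec: "s m \<le> s n" if "n \<le> m" for n m
    using that t D lam unfolding s_def by (intro mult_left_mono power_decreasing) auto
  have slim: "(\<lambda>n. s (n0 + n)) \<longlonglongrightarrow> 0" for n0
  proof -
    have "(\<lambda>n. t * D * lam * lam ^ n0 * lam ^ n) \<longlonglongrightarrow> t * D * lam * lam ^ n0 * 0"
      using lam by (intro tendsto_mult tendsto_const LIMSEQ_power_zero) auto
    then show ?thesis by (simp add: s_def power_add mult.assoc)
  qed
  have skey: "av (g N) * s n ^ N = 2 * B * \<rho> ^ Suc n" for n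
  proof -
    have "s n ^ N = t ^ N * D ^ N * (lam ^ N) ^ Suc n"
      by (simp add: s_def power_mult_distrib power_mult[symmetric] mult.commute)
    also have "\<dots> = t ^ N * (2 * B / M) * \<rho> ^ Suc n" using D lam by simp
    finally have "av (g N) * s n ^ N = (av (g N) * t ^ N) * (2 * B / M) * \<rho> ^ Suc n" by (simp add: mult.assoc)
    moreover have "g N \<noteq> 0" using M0 by (auto simp: M_def)
    ultimately show ?thesis using M0 t(1) by (simp add: M_def)
  qed
  obtain n1 where n1: "\<forall>n\<ge>n1. \<bar>s (0 + n)\<bar> < t" using LIMSEQ_D[OF slim[of 0] t(1)] by auto
  define n0 where "n0 = max n1 N"
  have n0: "n0 \<ge> N" "\<And>n. n \<ge> n0 \<Longrightarrow> s n \<le> t" using n1 by (auto simp: n0_def)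
  have step: "\<exists>\<beta>. P (Suc n) \<beta> = 0 \<and> av (\<beta> - \<alpha>) < s n \<and> av \<beta> \<le> t"
    if n: "n \<ge> n0" and al: "av \<alpha> \<le> t" and P0: "P n \<alpha> = 0" for n \<alpha>
  proof -
    define Q where "Q = Tp g \<alpha> (Suc n)"
    have PQ: "poly Q y = P (Suc n) (\<alpha> + y)" for y by (simp add: Q_def poly_Tp P_def)
    have c0: "coeff Q 0 = g (Suc n) * \<alpha> ^ Suc n"
    proof -
      have "coeff Q 0 = P (Suc n) \<alpha>" using PQ[of 0] by (simp add: poly_0_coeff_0)
      also have "\<dots> = P n \<alpha> + g (Suc n) * \<alpha> ^ Suc n" by (simp add: P_def)
      finally show ?thesis using P0 by simp
    qed
    have "av (coeff Q 0) = av (g (Suc n)) * av \<alpha> ^ Suc n" unfolding c0 mult av_power ..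
    also have "\<dots> \<le> av (g (Suc n)) * t ^ Suc n"
      using al by (intro mult_left_mono power_mono) auto
    also have "\<dots> \<le> B * \<rho> ^ Suc n" by (rule hb)
    also have "\<dots> < 2 * B * \<rho> ^ Suc n" using B \<rho> by simp
    also have "\<dots> = av (coeff Q N) * s n ^ N"
    proof -
      have "av (coeff Q N) = av (g N)" unfolding Q_def
        using Tp_coeff_N[of t \<alpha> N "Suc n" g M] t al n0 n M0 N(3) by (simp add: M_def)
      then show ?thesis using skey by simp
    qed
    finally obtain y where y: "poly Q y = 0" "av y < s n" using root_small[of "s n" Q N] spos by blast
    have "av (\<alpha> + y) \<le> max (av \<alpha>) (av y)" by (rule add_le)
    also have "\<dots> \<le> t" using al y n0(2)[OF n] by auto
    finally show ?thesis using y PQ by (intro exI[of _ "\<alpha> + y"]) auto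
  qed
  obtain \<alpha>0 where \<alpha>0: "P n0 \<alpha>0 = 0" "av \<alpha>0 \<le> t"
  proof -
    define Q where "Q = Tp g 0 n0"
    have "av (coeff Q 0) < av (coeff Q N) * t ^ N" using M0 n0 by (simp add: Q_def coeff_Tp0 M_def)
    then obtain y where y: "poly Q y = 0" "av y < t" using root_small[of t Q N] t by blast
    have "P n0 y = 0" using y by (simp add: Q_def poly_Tp P_def)
    then show ?thesis using that y by auto
  qed
  define \<alpha> where "\<alpha> = rec_nat \<alpha>0 (\<lambda>k x. SOME \<beta>. P (Suc (n0 + k)) \<beta> = 0 \<and> av (\<beta> - x) < s (n0 + k) \<and> av \<beta> \<le> t)"
  have inv: "P (n0 + k) (\<alpha> k) = 0 \<and> av (\<alpha> k) \<le> t" for k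
  proof (induction k)
    case 0 then show ?case using \<alpha>0 by (simp add: \<alpha>_def)
  next
    case (Suc k)
    have ex: "\<exists>\<beta>. P (Suc (n0 + k)) \<beta> = 0 \<and> av (\<beta> - \<alpha> k) < s (n0 + k) \<and> av \<beta> \<le> t"
      using step[of "n0 + k" "\<alpha> k"] Suc by auto
    have "\<alpha> (Suc k) = (SOME \<beta>. P (Suc (n0 + k)) \<beta> = 0 \<and> av (\<beta> - \<alpha> k) < s (n0 + k) \<and> av \<beta> \<le> t)"
      by (simp add: \<alpha>_def)
    then show ?case using someI_ex[OF ex] by simp
  qed
  have stp: "av (\<alpha> (Suc k) - \<alpha> k) < s (n0 + k)" for k
  proof -
    have ex: "\<exists>\<beta>. P (Suc (n0 + k)) \<beta> = 0 \<and> av (\<beta> - \<alpha> k) < s (n0 + k) \<and> av \<beta> \<le> t"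
      using step[of "n0 + k" "\<alpha> k"] inv[of k] by auto
    have "\<alpha> (Suc k) = (SOME \<beta>. P (Suc (n0 + k)) \<beta> = 0 \<and> av (\<beta> - \<alpha> k) < s (n0 + k) \<and> av \<beta> \<le> t)"
      by (simp add: \<alpha>_def)
    then show ?thesis using someI_ex[OF ex] by simp
  qed
  have cauchy: "av (\<alpha> m - \<alpha> k) \<le> s (n0 + k)" if "k \<le> m" for k m
    using that
  proof (induction m rule: dec_induct)
    case base then show ?case using spos[of "n0 + k"] by simp
  next
    case (step m)
    have "av (\<alpha> (Suc m) - \<alpha> k) \<le> max (av (\<alpha> (Suc m) - \<alpha> m)) (av (\<alpha> m - \<alpha> k))" by (rule tri)
    also have "\<dots> \<le> s (n0 + k)" using stp[of m] step sdec[of "n0 + k" "n0 + m"] by auto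
    finally show ?case .
  qed
  obtain L where L: "(\<lambda>n. av (\<alpha> n - L)) \<longlonglongrightarrow> 0" using cauchy_conv[of \<alpha> "\<lambda>k. s (n0 + k)", OF cauchy slim] by blast
  have Lt: "av L \<le> t" using lim_bound[OF L, of 0 0 t] inv by simp
  obtain G where G: "sums_v av (\<lambda>i. g i * ((a + L) - a) ^ i) G" using conv[rule_format, of "a + L"] Lt t by auto
  have G': "sums_v av (\<lambda>i. g i * L ^ i) G" using G by simp
  have "ps_eval av g a (a + L) = G" using ps_eval_eq[OF G] .
  then have G0: "G \<noteq> 0" using nz Lt t by auto
  have Gle: "av G \<le> B * \<rho> ^ Suc (n0 + k) + M / t * av (\<alpha> k - L)" for k
  proof -
    have "G = (G - P (n0 + k) L) + (P (n0 + k) L - P (n0 + k) (\<alpha> k))" using inv[of k] by simp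
    then have "av G \<le> max (av (G - P (n0 + k) L)) (av (P (n0 + k) L - P (n0 + k) (\<alpha> k)))"
      using add_le by metis
    also have "\<dots> \<le> max (B * \<rho> ^ Suc (n0 + k)) (M / t * av (L - \<alpha> k))"
      using tail_bound[OF G' Lt hb, of "n0 + k"] \<rho> B lip_bound[OF Lt _ t(1) hM, of "\<alpha> k" "n0 + k"] inv[of k]
      unfolding P_def by (intro max.mono) auto
    also have "\<dots> \<le> B * \<rho> ^ Suc (n0 + k) + M / t * av (\<alpha> k - L)"
      using av_commute[of L "\<alpha> k"] B \<rho> M0 t by (intro max.boundedI) auto
    finally show ?thesis .
  qed
  have "(\<lambda>k. B * \<rho> ^ Suc (n0 + k) + M / t * av (\<alpha> k - L)) \<longlonglongrightarrow> B * 0 + M / t * 0"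
  proof (intro tendsto_add tendsto_mult tendsto_const L)
    have "(\<lambda>k. \<rho> ^ Suc n0 * \<rho> ^ k) \<longlonglongrightarrow> \<rho> ^ Suc n0 * 0" using \<rho> by (intro tendsto_mult tendsto_const LIMSEQ_power_zero) auto
    then show "(\<lambda>k. \<rho> ^ Suc (n0 + k)) \<longlonglongrightarrow> 0" by (simp add: power_add mult.assoc)
  qed
  then have lim: "(\<lambda>k. B * \<rho> ^ Suc (n0 + k) + M / t * av (\<alpha> k - L)) \<longlonglongrightarrow> 0" by simp
  have "av G \<le> 0" using Gle by (intro LIMSEQ_le_const[OF lim]) auto
  then show False using G0 nonneg[of G] by simp
qed

end


context NA begin

lemma sums_diff:
  assumes "sums_v av f A" "sums_v av g B" shows "sums_v av (\<lambda>i. f i - g i) (A - B)"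
proof -
  have hf: "(\<lambda>n. av (sum f {..<n} - A)) \<longlonglongrightarrow> 0" and hg: "(\<lambda>n. av (sum g {..<n} - B)) \<longlonglongrightarrow> 0"
    using assms unfolding sums_v_def by auto
  have le: "av (sum (\<lambda>i. f i - g i) {..<n} - (A - B)) \<le> av (sum f {..<n} - A) + av (sum g {..<n} - B)" for n
  proof -
    have "sum (\<lambda>i. f i - g i) {..<n} - (A - B) = (sum f {..<n} - A) - (sum g {..<n} - B)"
      by (simp add: sum_subtractf)
    then have "av (sum (\<lambda>i. f i - g i) {..<n} - (A - B)) \<le> max (av (sum f {..<n} - A)) (av (sum g {..<n} - B))"
      using diff_le by metis
    also have "\<dots> \<le> av (sum f {..<n} - A) + av (sum g {..<n} - B)"
      using nonneg[of "sum f {..<n} - A"] nonneg[of "sum g {..<n} - B"] by (intro max.boundedI) linarith+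
    finally show ?thesis .
  qed
  have "(\<lambda>n. av (sum f {..<n} - A) + av (sum g {..<n} - B)) \<longlonglongrightarrow> 0 + 0" by (intro tendsto_add hf hg)
  then have l: "(\<lambda>n. av (sum f {..<n} - A) + av (sum g {..<n} - B)) \<longlonglongrightarrow> 0" by simp
  show ?thesis unfolding sums_v_def
    by (rule tendsto_sandwich[OF _ _ tendsto_const l]) (use le in auto)
qed

lemma sums_center: "sums_v av (\<lambda>i. c i * (a - a) ^ i) (c 0)"
proof -
  have "(\<lambda>n. av (sum (\<lambda>i. c i * (a - a) ^ i) {..<Suc n} - c 0)) \<longlonglongrightarrow> 0"
    by (simp add: sum.lessThan_Suc_shift)
  then show ?thesis unfolding sums_v_def by (rule LIMSEQ_imp_Suc)
qed

lemma ps_eval_center: "ps_eval av c a a = c 0"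
  by (rule ps_eval_eq[OF sums_center])

end

context CV begin

lemma deriv_conv:
  assumes "sums_v av (\<lambda>i. c i * w ^ i) S"
  shows "\<exists>s. sums_v av (\<lambda>i. ps_deriv c i * w ^ i) s"
proof (rule terms_conv)
  show "(\<lambda>i. av (ps_deriv c i * w ^ i)) \<longlonglongrightarrow> 0"
  proof (cases "w = 0")
    case True
    have "(\<lambda>i. av (ps_deriv c (Suc i) * w ^ Suc i)) \<longlonglongrightarrow> 0" using True by simp
    then show ?thesis by (rule LIMSEQ_imp_Suc)
  next
    case False
    have wp: "av w > 0" using False pos by blast
    have t0: "(\<lambda>i. av (c i * w ^ i)) \<longlonglongrightarrow> 0" by (rule terms_to_0[OF assms])
    have "(\<lambda>i. av (c (Suc i) * w ^ Suc i) / av w) \<longlonglongrightarrow> 0 / av w"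
      by (intro tendsto_divide tendsto_const LIMSEQ_Suc[OF t0]) (use wp in auto)
    then have l: "(\<lambda>i. av (c (Suc i) * w ^ Suc i) / av w) \<longlonglongrightarrow> 0" by simp
    have le: "av (ps_deriv c i * w ^ i) \<le> av (c (Suc i) * w ^ Suc i) / av w" for i
    proof -
      have "av (ps_deriv c i * w ^ i) = av (of_nat (Suc i) :: 'a) * (av (c (Suc i)) * av w ^ i)"
        by (simp add: ps_deriv_def mult)
      also have "\<dots> \<le> 1 * (av (c (Suc i)) * av w ^ i)" using of_nat_le1[of "Suc i"] by (intro mult_right_mono) (auto simp del: of_nat_Suc)
      also have "\<dots> = av (c (Suc i) * w ^ Suc i) / av w" using wp False by (simp add: mult)
      finally show ?thesis .
    qed
    show ?thesis by (rule tendsto_sandwich[OF _ _ tendsto_const l]) (use le in auto)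
  qed
qed

end


context CV begin

context
  fixes c :: "nat \<Rightarrow> 'a" and a :: 'a and r :: real
  assumes r: "r > 0" and conv: "ps_converges_on av c a (disc av a r)"
    and nz: "\<forall>z\<in>disc av a r. ps_eval av (ps_deriv c) a z \<noteq> 0"
begin

lemma convF: "av (z - a) < r \<Longrightarrow> \<exists>s. sums_v av (\<lambda>i. c i * (z - a) ^ i) s"
  using conv unfolding ps_converges_on_def disc_def by auto

lemma dbound: assumes "0 < t" "t < r" shows "av (ps_deriv c j) * t ^ j \<le> av (c 1)"
proof -
  have cv: "\<forall>z. av (z - a) < r \<longrightarrow> (\<exists>s. sums_v av (\<lambda>i. ps_deriv c i * (z - a) ^ i) s)"
  proof (intro allI impI)
    fix z assume "av (z - a) < r"
    then obtain S where "sums_v av (\<lambda>i. c i * (z - a) ^ i) S" using convF by blast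
    then show "\<exists>s. sums_v av (\<lambda>i. ps_deriv c i * (z - a) ^ i) s" by (rule deriv_conv)
  qed
  have nz': "\<forall>z. av (z - a) < r \<longrightarrow> ps_eval av (ps_deriv c) a z \<noteq> 0" using nz by (auto simp: disc_def)
  have "av (ps_deriv c j) * t ^ j \<le> av (ps_deriv c 0)" by (rule nozero_bound[OF cv nz' assms])
  then show ?thesis by (simp add: ps_deriv_def)
qed

lemma c1nz: "c 1 \<noteq> 0"
proof -
  have "a \<in> disc av a r" using r by (simp add: disc_def)
  then have "ps_eval av (ps_deriv c) a a \<noteq> 0" using nz by blast
  then show ?thesis by (simp add: ps_eval_center ps_deriv_def)
qed

lemma cbound: assumes i: "i \<ge> 1" and t: "0 < t" "t < r"
  shows "av (c i) * (kappa av * t) ^ (i - 1) \<le> av (c 1)"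
proof -
  have e: "ps_deriv c (i - 1) = of_nat i * c i" using i by (simp add: ps_deriv_def)
  have "av (c i) * (kappa av * t) ^ (i - 1) = av (c i) * t ^ (i - 1) * kappa av ^ (i - 1)"
    by (simp add: power_mult_distrib)
  also have "\<dots> \<le> av (c i) * t ^ (i - 1) * av (of_nat i :: 'a)"
    using kappa_pow_le[OF i] t by (intro mult_left_mono) auto
  also have "\<dots> = av (ps_deriv c (i - 1)) * t ^ (i - 1)" unfolding e by (simp add: mult)
  also have "\<dots> \<le> av (c 1)" by (rule dbound[OF t])
  finally show ?thesis .
qed

lemma qbound:
  assumes s: "0 < s" "s < kappa av * r"
  shows "\<exists>q. 0 < q \<and> q < 1 \<and> (\<forall>i\<ge>2. av (c i) * s ^ (i - 1) \<le> q * av (c 1))"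
proof -
  let ?k = "kappa av"
  have k: "0 < ?k" "?k \<le> 1" using kappa_props by auto
  define t where "t = (s / ?k + r) / 2"
  have sk: "s / ?k < r" using s k by (simp add: field_simps)
  have sk0: "0 < s / ?k" using s k by simp
  define u where "u = s / ?k"
  have t1: "u < t" "t < r" "0 < t" using sk sk0 unfolding t_def u_def[symmetric] by auto
  have t: "s / ?k < t" "t < r" "0 < t" using t1 by (auto simp: u_def)
  define q where "q = s / (?k * t)"
  have q: "0 < q" "q < 1" using t k s by (auto simp: q_def field_simps)
  have sq: "s = ?k * t * q" using t k by (simp add: q_def)
  have "av (c i) * s ^ (i - 1) \<le> q * av (c 1)" if i: "i \<ge> 2" for i
  proof -
    have "av (c i) * s ^ (i - 1) = (av (c i) * (?k * t) ^ (i - 1)) * q ^ (i - 1)"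
      unfolding sq by (simp add: power_mult_distrib)
    also have "\<dots> \<le> av (c 1) * q ^ (i - 1)"
      using cbound[of i t] i t q by (intro mult_right_mono) auto
    also have "\<dots> \<le> av (c 1) * q ^ 1"
      using q i by (intro mult_left_mono power_decreasing) auto
    finally show ?thesis by (simp add: mult.commute)
  qed
  then show ?thesis using q by blast
qed

lemma key:
  assumes s: "0 < s" "s < kappa av * r" and q: "0 < q" "q < 1"
    and qb: "\<forall>i\<ge>2. av (c i) * s ^ (i - 1) \<le> q * av (c 1)"
    and z: "av (z - a) \<le> s" and w: "av (w - a) \<le> s"
  shows "av (ps_eval av c a z - ps_eval av c a w - c 1 * (z - w)) \<le> q * av (c 1) * av (z - w)"
proof -
  have k: "kappa av \<le> 1" "0 < kappa av" using kappa_props by auto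
  have "kappa av * r \<le> 1 * r" using k r by (intro mult_right_mono) auto
  then have sr: "s < r" using s by linarith
  have zr: "av (z - a) < r" using z sr by linarith
  have wr: "av (w - a) < r" using w sr by linarith
  obtain Sz where Sz: "sums_v av (\<lambda>i. c i * (z - a) ^ i) Sz" using convF[OF zr] by blast
  obtain Sw where Sw: "sums_v av (\<lambda>i. c i * (w - a) ^ i) Sw" using convF[OF wr] by blast
  have Fz: "ps_eval av c a z = Sz" by (rule ps_eval_eq[OF Sz])
  have Fw: "ps_eval av c a w = Sw" by (rule ps_eval_eq[OF Sw])
  define f where "f = (\<lambda>i. c i * (z - a) ^ i - c i * (w - a) ^ i)"
  have S: "sums_v av f (Sz - Sw)" unfolding f_def by (rule sums_diff[OF Sz Sw])
  have "av (Sz - Sw - c 1 * (z - w)) \<le> q * av (c 1) * av (z - w)"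
  proof (rule sums_bound[OF S])
    fix n :: nat assume n: "n \<ge> 2"
    have s2: "sum f {..<2} = c 1 * (z - w)" by (simp add: f_def numeral_2_eq_2 algebra_simps)
    have "sum f {..<n} - c 1 * (z - w) = sum f {2..<n}" using sum_split_diff[OF n, of f] s2 by simp
    also have "av \<dots> \<le> q * av (c 1) * av (z - w)"
    proof (rule sum_le)
      fix i assume i: "i \<in> {2..<n}"
      have "f i = c i * ((z - a) ^ i - (w - a) ^ i)" by (simp add: f_def algebra_simps)
      then have "av (f i) = av (c i) * av ((z - a) ^ i - (w - a) ^ i)" by (simp add: mult)
      also have "\<dots> \<le> av (c i) * (av (z - w) * s ^ (i - 1))"
      proof (intro mult_left_mono)
        have "av ((z - a) ^ i - (w - a) ^ i) * s \<le> av ((z - a) - (w - a)) * s ^ i" by (rule pow_diff[OF z w])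
        also have "s ^ i = s ^ (i - 1) * s" using i by (cases i) auto
        finally have "av ((z - a) ^ i - (w - a) ^ i) * s \<le> (av (z - w) * s ^ (i - 1)) * s" by (simp add: mult.assoc)
        then show "av ((z - a) ^ i - (w - a) ^ i) \<le> av (z - w) * s ^ (i - 1)" using s by simp
      qed simp
      also have "\<dots> = (av (c i) * s ^ (i - 1)) * av (z - w)" by simp
      also have "\<dots> \<le> q * av (c 1) * av (z - w)" using qb i by (intro mult_right_mono) auto
      finally show "av (f i) \<le> q * av (c 1) * av (z - w)" .
    qed (use q in auto)
    finally show "av (sum f {..<n} - c 1 * (z - w)) \<le> q * av (c 1) * av (z - w)" .
  qed
  then show ?thesis using Fz Fw by simp
qed

end
end


context CV begin

context
  fixes c :: "nat \<Rightarrow> 'a" and a :: 'a and r :: real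
  assumes r: "r > 0" and conv: "ps_converges_on av c a (disc av a r)"
    and nz: "\<forall>z\<in>disc av a r. ps_eval av (ps_deriv c) a z \<noteq> 0"
begin

lemmas key' = key[OF r conv nz] and qbound' = qbound[OF r conv nz] and c1nz' = c1nz[OF r conv nz]

lemma main_bij:
  "bij_betw (ps_eval av c a) (disc av a (kappa av * r)) (disc av (c 0) (av (c 1) * kappa av * r))"
proof -
  let ?F = "ps_eval av c a"
  let ?k = "kappa av"
  have k: "0 < ?k" "?k \<le> 1" using kappa_props by auto
  have c1: "av (c 1) > 0" using c1nz' pos by blast
  have Fa: "?F a = c 0" by (rule ps_eval_center)
  have inj: "inj_on ?F (disc av a (?k * r))"
  proof (rule inj_onI)
    fix z w assume z: "z \<in> disc av a (?k * r)" and w: "w \<in> disc av a (?k * r)" and e: "?F z = ?F w"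
    show "z = w"
    proof (rule ccontr)
      assume zw: "z \<noteq> w"
      define s where "s = max (av (z - a)) (av (w - a))"
      have s0: "0 < s"
      proof (rule ccontr)
        assume "\<not> 0 < s"
        moreover have "av (z - a) \<le> s" "av (w - a) \<le> s" by (simp_all add: s_def)
        ultimately have "av (z - a) \<le> 0" "av (w - a) \<le> 0" by linarith+
        then have "z - a = 0" "w - a = 0" using nonneg[of "z - a"] nonneg[of "w - a"] zero_iff by (metis order_antisym)+
        then show False using zw by simp
      qed
      have s1: "s < ?k * r" using z w by (auto simp: s_def disc_def)
      obtain q where q: "0 < q" "q < 1" "\<forall>i\<ge>2. av (c i) * s ^ (i - 1) \<le> q * av (c 1)" using qbound'[OF s0 s1] by blast
      have "av (?F z - ?F w - c 1 * (z - w)) \<le> q * av (c 1) * av (z - w)"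
        by (rule key'[OF s0 s1 q]) (auto simp: s_def)
      then have "av (c 1) * av (z - w) \<le> q * av (c 1) * av (z - w)" using e by (simp add: mult)
      moreover have "q * av (c 1) * av (z - w) < av (c 1) * av (z - w)" using q c1 zw pos[of "z - w"] by simp
      ultimately show False by linarith
    qed
  qed
  have into: "?F z \<in> disc av (c 0) (av (c 1) * ?k * r)" if z: "z \<in> disc av a (?k * r)" for z
  proof (cases "z = a")
    case True then show ?thesis using Fa c1 k r by (simp add: disc_def)
  next
    case False
    define s where "s = av (z - a)"
    have s0: "0 < s" using False pos[of "z - a"] by (simp add: s_def)
    have s1: "s < ?k * r" using z by (simp add: s_def disc_def)
    obtain q where q: "0 < q" "q < 1" "\<forall>i\<ge>2. av (c i) * s ^ (i - 1) \<le> q * av (c 1)" using qbound'[OF s0 s1] by blast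
    have h: "av (?F z - ?F a - c 1 * (z - a)) \<le> q * av (c 1) * av (z - a)"
      by (rule key'[OF s0 s1 q]) (auto simp: s_def)
    also have "\<dots> < av (c 1 * (z - a))" using q c1 s0 by (simp add: mult s_def)
    finally have lt: "av (?F z - ?F a - c 1 * (z - a)) < av (c 1 * (z - a))" .
    have "?F z - c 0 = c 1 * (z - a) + (?F z - ?F a - c 1 * (z - a))" using Fa by simp
    then have "av (?F z - c 0) = av (c 1 * (z - a))" using add_strict[OF lt] by simp
    also have "\<dots> < av (c 1) * ?k * r" using s1 c1 by (simp add: mult s_def mult.assoc)
    finally show ?thesis by (simp add: disc_def)
  qed
  have onto: "b \<in> ?F ` disc av a (?k * r)" if b: "b \<in> disc av (c 0) (av (c 1) * ?k * r)" for b
  proof -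
    have bl: "av (b - c 0) / av (c 1) < ?k * r" using b c1 by (simp add: disc_def field_simps)
    define s where "s = (av (b - c 0) / av (c 1) + ?k * r) / 2"
    have bs: "av (b - c 0) / av (c 1) < s" and s1: "s < ?k * r" and s0: "0 < s"
    proof -
      define u where "u = av (b - c 0) / av (c 1)"
      have u0: "0 \<le> u" using c1 by (simp add: u_def)
      have "u < ?k * r" using bl by (simp add: u_def)
      define v where "v = ?k * r"
      have "u < v" using \<open>u < ?k * r\<close> by (simp add: v_def)
      then have "u < (u + v) / 2" "(u + v) / 2 < v" "0 < (u + v) / 2" using u0 by auto
      then have "u < (u + ?k * r) / 2" "(u + ?k * r) / 2 < ?k * r" "0 < (u + ?k * r) / 2" by (simp_all add: v_def)
      then show "av (b - c 0) / av (c 1) < s" "s < ?k * r" "0 < s" by (auto simp: s_def u_def)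
    qed
    obtain q where q: "0 < q" "q < 1" "\<forall>i\<ge>2. av (c i) * s ^ (i - 1) \<le> q * av (c 1)" using qbound'[OF s0 s1] by blast
    define T where "T = (\<lambda>z. z - (?F z - b) / c 1)"
    have Tlip: "av (T z - T w) \<le> q * av (z - w)" if "av (z - a) \<le> s" "av (w - a) \<le> s" for z w
    proof -
      have "T z - T w = - (?F z - ?F w - c 1 * (z - w)) / c 1" using c1nz' by (simp add: T_def field_simps)
      then have "av (T z - T w) = av (- (?F z - ?F w - c 1 * (z - w))) / av (c 1)" by (simp only: av_divide)
      then have "av (T z - T w) = av (?F z - ?F w - c 1 * (z - w)) / av (c 1)" by (simp only: av_uminus)
      also have "\<dots> \<le> q * av (c 1) * av (z - w) / av (c 1)"
        using key'[OF s0 s1 q that] c1 by (intro divide_right_mono) auto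
      finally show ?thesis using c1 c1nz' by simp
    qed
    have Tin: "av (T z - a) \<le> s" if "av (z - a) \<le> s" for z
    proof -
      have "T z - a = (b - c 0) / c 1 - (?F z - ?F a - c 1 * (z - a)) / c 1"
        using c1nz' Fa by (simp add: T_def field_simps)
      then have "av (T z - a) \<le> max (av ((b - c 0) / c 1)) (av ((?F z - ?F a - c 1 * (z - a)) / c 1))"
        using diff_le by metis
      also have "\<dots> \<le> s"
      proof (rule max.boundedI)
        show "av ((b - c 0) / c 1) \<le> s" using bs by simp
        have "av ((?F z - ?F a - c 1 * (z - a)) / c 1) = av (?F z - ?F a - c 1 * (z - a)) / av (c 1)" by simp
        also have "\<dots> \<le> q * av (c 1) * av (z - a) / av (c 1)"
          using key'[OF s0 s1 q that, of a] s0 c1 by (intro divide_right_mono) auto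
        also have "\<dots> = q * av (z - a)" using c1 c1nz' by simp
        also have "\<dots> \<le> 1 * s" using q that by (intro mult_mono) auto
        finally show "av ((?F z - ?F a - c 1 * (z - a)) / c 1) \<le> s" by simp
      qed
      finally show ?thesis .
    qed
    define X where "X = (\<lambda>k. (T ^^ k) a)"
    have XS: "X (Suc k) = T (X k)" for k by (simp add: X_def)
    have Xin: "av (X k - a) \<le> s" for k
    proof (induction k)
      case 0 then show ?case using s0 by (simp add: X_def)
    next
      case (Suc k) then show ?case using Tin XS by simp
    qed
    have Xstep: "av (X (Suc k) - X k) \<le> q ^ k * s" for k
    proof (induction k)
      case 0
      have "av (X 1 - X 0) = av (T a - a)" by (simp add: X_def)
      also have "\<dots> \<le> s" using Tin[of a] s0 by simp
      finally show ?case by simp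
    next
      case (Suc k)
      have "av (X (Suc (Suc k)) - X (Suc k)) \<le> q * av (X (Suc k) - X k)"
        unfolding XS[of "Suc k"] XS[of k] using Tlip Xin XS by (metis)
      also have "\<dots> \<le> q * (q ^ k * s)" using Suc q by (intro mult_left_mono) auto
      finally show ?case by simp
    qed
    have Xc: "av (X m - X k) \<le> q ^ k * s" if "k \<le> m" for k m
      using that
    proof (induction m rule: dec_induct)
      case base then show ?case using s0 q by simp
    next
      case (step m)
      have "av (X (Suc m) - X k) \<le> max (av (X (Suc m) - X m)) (av (X m - X k))" by (rule tri)
      also have "\<dots> \<le> q ^ k * s"
      proof (rule max.boundedI)
        have "q ^ m \<le> q ^ k" using step q by (intro power_decreasing) auto
        then have "q ^ m * s \<le> q ^ k * s" using s0 by (intro mult_right_mono) auto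
        then show "av (X (Suc m) - X m) \<le> q ^ k * s" using Xstep[of m] by linarith
      qed (use step in auto)
      finally show ?case .
    qed
    have ql: "(\<lambda>k. q ^ k * s) \<longlonglongrightarrow> 0 * s" using q by (intro tendsto_mult tendsto_const LIMSEQ_power_zero) auto
    then have ql0: "(\<lambda>k. q ^ k * s) \<longlonglongrightarrow> 0" by simp
    obtain L where L: "(\<lambda>n. av (X n - L)) \<longlonglongrightarrow> 0" using cauchy_conv[of X, OF Xc ql0] by blast
    have La: "av (L - a) \<le> s" using lim_bound[OF L, of 0 a s] Xin by simp
    have bnd: "av (T L - L) \<le> q * av (X k - L) + av (X (Suc k) - L)" for k
    proof -
      have "av (T L - L) \<le> max (av (T L - X (Suc k))) (av (X (Suc k) - L))" by (rule tri)
      also have "av (T L - X (Suc k)) \<le> q * av (L - X k)" unfolding XS using Tlip La Xin by blast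
      also have "av (L - X k) = av (X k - L)" by (rule av_commute)
      finally show ?thesis using q nonneg[of "X k - L"] nonneg[of "X (Suc k) - L"]
        by (smt (verit, best) max.bounded_iff mult_nonneg_nonneg)
    qed
    have "(\<lambda>k. q * av (X k - L) + av (X (Suc k) - L)) \<longlonglongrightarrow> q * 0 + 0"
      by (intro tendsto_add tendsto_mult tendsto_const L LIMSEQ_Suc[OF L])
    then have lim: "(\<lambda>k. q * av (X k - L) + av (X (Suc k) - L)) \<longlonglongrightarrow> 0" by simp
    have "av (T L - L) \<le> 0" by (rule LIMSEQ_le_const[OF lim]) (use bnd in auto)
    then have "T L = L" using nonneg[of "T L - L"] by simp
    then have "(?F L - b) / c 1 = 0" by (simp add: T_def)
    then have FL: "?F L = b" using c1nz' by simp
    have "L \<in> disc av a (?k * r)" using La s1 by (simp add: disc_def)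
    then show ?thesis using FL by blast
  qed
  show ?thesis unfolding bij_betw_def using inj into onto by blast
qed

end
end

theorem lemma4p2:
  fixes av :: "'a::field_char_0 \<Rightarrow> real" and a :: 'a and r :: real and c :: "nat \<Rightarrow> 'a"
  assumes "Cv_field av"
    and "r > 0"
    and "ps_converges_on av c a (disc av a r)"
    and "\<forall>z\<in>disc av a r. ps_eval av (ps_deriv c) a z \<noteq> 0"
  shows "bij_betw (ps_eval av c a) (disc av a (kappa av * r))
           (disc av (c 0) (av (c 1) * kappa av * r))"
proof -
  interpret CV av using assms(1) unfolding Cv_field_def by unfold_locales auto
  show ?thesis by (rule main_bij[OF assms(2-4)])
qed


end
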